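(* Let $k$ be a difference field of characteristic $0$, $R=k\{y_1,\ldots,y_n\}$, $S\subseteq\mathbb{N}[x]^n$, and $I=\langle \mathbf{y}^{\mathbf{u}}:\mathbf{u}\in S\rangle_r$. Then there exist $\mathbf{b}_1,\ldots,\mathbf{b}_s\in(\mathbb{N}\cup\{-1\})^n$ such that \[I=\mathfrak{m}^{\mathbf{b}_1}\cap\cdots\cap\mathfrak{m}^{\mathbf{b}_s}.\] Moreover, if such a decomposition is irredundant, then it is unique (i.e. any two irredundant decompositions of this form have the same set of intersectands).
   Context: A difference field is a field $k$ with a ring endomorphism $\sigma$. $R=k\{y_1,\ldots,y_n\}$ is the polynomial ring over $k$ in the variables $\sigma^j(y_i)$ ($1\le i\le n$, $j\ge0$), with $\sigma$ extended naturally. For $p=\sum_i c_ix^i\in\mathbb{N}[x]$ and $a\in R$, $a^p=\prod_i(\sigma^i(a))^{c_i}$; for $\mathbf{u}\in\mathbb{N}[x]^n$, $\mathbf{y}^{\mathbf{u}}=y_1^{u_1}\cdots y_n^{u_n}$. A $\sigma$-ideal is an ideal $I$ with $\sigma(I)\subseteq I$; it is well-mixed if $ab\in I$ implies $a\sigma(b)\in I$. $\langle F\rangle_r$ denotes the smallest radical well-mixed $\sigma$-ideal containing $F$. For $\mathbf{b}=(b_1,\ldots,b_n)\in(\mathbb{N}\cup\{-1\})^n$, $\mathfrak{m}^{\mathbf{b}}$ is the $\sigma$-ideal generated by $\{\sigma^{b_i}(y_i): b_i\neq -1\}$ (i.e. by $y_i^{x^{b_i}}$ for $b_i\ne-1$).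 *)

theory Defs
  imports "HOL-Library.Poly_Mapping" "HOL-Computational_Algebra.Polynomial"
begin

text \<open>Difference polynomial ring R = k{y_i : i in 'n}: polynomials over k in the
  variables sigma^j(y_i), encoded as the pair (i, j).\<close>

type_synonym ('n, 'a) dpoly = "(('n \<times> nat) \<Rightarrow>\<^sub>0 nat) \<Rightarrow>\<^sub>0 'a"

definition dvar :: "'n \<Rightarrow> nat \<Rightarrow> ('n, 'a::comm_ring_1) dpoly" where
  "dvar i j = Poly_Mapping.single (Poly_Mapping.single (i, j) 1) 1"

definition ring_endo :: "('a::field \<Rightarrow> 'a) \<Rightarrow> bool" where
  "ring_endo \<sigma> \<longleftrightarrow> \<sigma> 1 = 1 \<and> (\<forall>a b. \<sigma> (a + b) = \<sigma> a + \<sigma> b) \<and> (\<forall>a b. \<sigma> (a * b) = \<sigma> a * \<sigma> b)"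

definition shift_mon :: "(('n \<times> nat) \<Rightarrow>\<^sub>0 nat) \<Rightarrow> (('n \<times> nat) \<Rightarrow>\<^sub>0 nat)" where
  "shift_mon m = (\<Sum>v\<in>Poly_Mapping.keys m. Poly_Mapping.single (fst v, Suc (snd v)) (Poly_Mapping.lookup m v))"

definition sigmaR :: "('a::field \<Rightarrow> 'a) \<Rightarrow> ('n, 'a) dpoly \<Rightarrow> ('n, 'a) dpoly" where
  "sigmaR \<sigma> p = (\<Sum>m\<in>Poly_Mapping.keys p. Poly_Mapping.single (shift_mon m) (\<sigma> (Poly_Mapping.lookup p m)))"

definition is_ideal :: "('n, 'a::field) dpoly set \<Rightarrow> bool" where
  "is_ideal I \<longleftrightarrow> 0 \<in> I \<and> (\<forall>a\<in>I. \<forall>b\<in>I. a + b \<in> I) \<and> (\<forall>a\<in>I. \<forall>r. r * a \<in> I)"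

definition sigma_ideal :: "('a::field \<Rightarrow> 'a) \<Rightarrow> ('n, 'a) dpoly set \<Rightarrow> bool" where
  "sigma_ideal \<sigma> I \<longleftrightarrow> is_ideal I \<and> (\<forall>a\<in>I. sigmaR \<sigma> a \<in> I)"

definition well_mixed :: "('a::field \<Rightarrow> 'a) \<Rightarrow> ('n, 'a) dpoly set \<Rightarrow> bool" where
  "well_mixed \<sigma> I \<longleftrightarrow> (\<forall>a b. a * b \<in> I \<longrightarrow> a * sigmaR \<sigma> b \<in> I)"

definition radical_set :: "('n, 'a::field) dpoly set \<Rightarrow> bool" where
  "radical_set I \<longleftrightarrow> (\<forall>a (k::nat). k \<ge> 1 \<longrightarrow> a ^ k \<in> I \<longrightarrow> a \<in> I)"

definition rwm_closure :: "('a::field \<Rightarrow> 'a) \<Rightarrow> ('n, 'a) dpoly set \<Rightarrow> ('n, 'a) dpoly set" where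
  "rwm_closure \<sigma> F = \<Inter>{I. sigma_ideal \<sigma> I \<and> well_mixed \<sigma> I \<and> radical_set I \<and> F \<subseteq> I}"

definition sigma_gen :: "('a::field \<Rightarrow> 'a) \<Rightarrow> ('n, 'a) dpoly set \<Rightarrow> ('n, 'a) dpoly set" where
  "sigma_gen \<sigma> G = \<Inter>{I. sigma_ideal \<sigma> I \<and> G \<subseteq> I}"

definition ymon :: "('n::finite \<Rightarrow> nat poly) \<Rightarrow> ('n, 'a::field) dpoly" where
  "ymon u = (\<Prod>i\<in>UNIV. \<Prod>j\<le>degree (u i). dvar i j ^ coeff (u i) j)"

text \<open>m^b for b in (N \<union> {-1})^n, encoded as b :: 'n \<Rightarrow> int with b i \<ge> -1\<close>
definition valid_b :: "('n \<Rightarrow> int) \<Rightarrow> bool" where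
  "valid_b b \<longleftrightarrow> (\<forall>i. b i \<ge> -1)"

definition mb :: "('a::field \<Rightarrow> 'a) \<Rightarrow> ('n \<Rightarrow> int) \<Rightarrow> ('n, 'a) dpoly set" where
  "mb \<sigma> b = sigma_gen \<sigma> {dvar i (nat (b i)) | i. b i \<noteq> -1}"

end

theory Submission
  imports Defs "HOL-Library.Countable"
begin



definition push :: "('k \<Rightarrow> 'l) \<Rightarrow> ('k \<Rightarrow>\<^sub>0 'b::comm_monoid_add) \<Rightarrow> ('l \<Rightarrow>\<^sub>0 'b)" where
  "push g p = (\<Sum>v\<in>Poly_Mapping.keys p. Poly_Mapping.single (g v) (Poly_Mapping.lookup p v))"

lemma pm_expand: "p = (\<Sum>v\<in>Poly_Mapping.keys p. Poly_Mapping.single v (Poly_Mapping.lookup p v))"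
proof (rule poly_mapping_eqI)
  fix k
  show "Poly_Mapping.lookup p k = Poly_Mapping.lookup (\<Sum>v\<in>Poly_Mapping.keys p. Poly_Mapping.single v (Poly_Mapping.lookup p v)) k"
    by (cases "k \<in> Poly_Mapping.keys p")
      (auto simp: lookup_sum lookup_single when_def in_keys_iff sum.delta' simp del: lookup_not_eq_zero_eq_in_keys)
qed

lemma lookup_push:
  assumes "inj g"
  shows "Poly_Mapping.lookup (push g p) k = (if k \<in> range g then Poly_Mapping.lookup p (inv g k) else 0)"
proof -
  have "Poly_Mapping.lookup (push g p) k = (\<Sum>v\<in>Poly_Mapping.keys p. (Poly_Mapping.lookup p v when g v = k))"
    by (simp add: push_def lookup_sum lookup_single)
  also have "\<dots> = (if k \<in> range g then Poly_Mapping.lookup p (inv g k) else 0)"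
  proof (cases "k \<in> range g")
    case True
    then obtain v where v: "k = g v" by auto
    have "(\<Sum>w\<in>Poly_Mapping.keys p. (Poly_Mapping.lookup p w when g w = k)) = (\<Sum>w\<in>Poly_Mapping.keys p. (if w = v then Poly_Mapping.lookup p w else 0))"
      using assms v by (intro sum.cong) (auto simp: when_def inj_eq)
    also have "\<dots> = Poly_Mapping.lookup p v"
      by (simp add: sum.delta' in_keys_iff)
    finally show ?thesis using v assms True by simp
  next
    case False
    then show ?thesis by (auto simp: when_def intro!: sum.neutral)
  qed
  finally show ?thesis .
qed

lemma push_add: "inj g \<Longrightarrow> push g (p + q) = push g p + push g q"
  by (rule poly_mapping_eqI) (simp add: lookup_push lookup_add)

lemma push_zero [simp]: "push g 0 = 0"
  by (simp add: push_def)

lemma push_single: "inj g \<Longrightarrow> push g (Poly_Mapping.single k a) = Poly_Mapping.single (g k) a"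
proof (rule poly_mapping_eqI)
  fix k' assume g: "inj g"
  show "Poly_Mapping.lookup (push g (Poly_Mapping.single k a)) k' = Poly_Mapping.lookup (Poly_Mapping.single (g k) a) k'"
  proof (cases "k' = g k")
    case True thus ?thesis using g by (simp add: lookup_push)
  next
    case False
    hence "k' \<notin> range g \<or> inv g k' \<noteq> k" using g by auto
    thus ?thesis using False g by (auto simp: lookup_push lookup_single when_def)
  qed
qed

lemma push_sum: "inj g \<Longrightarrow> push g (sum f A) = (\<Sum>x\<in>A. push g (f x))"
  by (induction A rule: infinite_finite_induct) (auto simp: push_add)

lemma inj_push: "inj g \<Longrightarrow> inj (push g)"
proof (rule injI)
  fix p q assume g: "inj g" and e: "push g p = push g q"
  show "p = q"
  proof (rule poly_mapping_eqI)
    fix k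
    have "Poly_Mapping.lookup (push g p) (g k) = Poly_Mapping.lookup (push g q) (g k)" using e by simp
    thus "Poly_Mapping.lookup p k = Poly_Mapping.lookup q k" using g by (simp add: lookup_push)
  qed
qed

lemma push_mult:
  fixes g :: "'k \<Rightarrow> 'l"
  assumes g: "inj g"
  shows "push (push g) ((p::('k \<Rightarrow>\<^sub>0 nat) \<Rightarrow>\<^sub>0 'a::comm_ring_1) * q) = push (push g) p * push (push g) q"
proof -
  have ig: "inj (push g)" using g by (rule inj_push)
  have "p * q = (\<Sum>v\<in>Poly_Mapping.keys p. \<Sum>w\<in>Poly_Mapping.keys q. Poly_Mapping.single (v + w) (Poly_Mapping.lookup p v * Poly_Mapping.lookup q w))"
    by (subst pm_expand[of p], subst pm_expand[of q]) (simp add: sum_distrib_left sum_distrib_right mult_single sum.swap[of _ "Poly_Mapping.keys q"])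
  hence "push (push g) (p * q) = (\<Sum>v\<in>Poly_Mapping.keys p. \<Sum>w\<in>Poly_Mapping.keys q. Poly_Mapping.single (push g v + push g w) (Poly_Mapping.lookup p v * Poly_Mapping.lookup q w))"
    using g ig by (simp add: push_sum[OF ig] push_single[OF ig] push_add[OF g])
  also have "\<dots> = push (push g) p * push (push g) q"
    unfolding push_def[of "push g" p] push_def[of "push g" q] by (simp add: sum_distrib_left sum_distrib_right mult_single sum.swap[of _ "Poly_Mapping.keys q"])
  finally show ?thesis .
qed

lemma dpoly_no_zero_divisors:
  fixes p q :: "('k::countable \<Rightarrow>\<^sub>0 nat) \<Rightarrow>\<^sub>0 'a::field"
  assumes "p * q = 0" shows "p = 0 \<or> q = 0"
proof -
  define g :: "'k \<Rightarrow> nat" where "g = to_nat"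
  have g: "inj g" by (simp add: g_def)
  have ig: "inj (push (push g))" using g by (intro inj_push)
  have "push (push g) p * push (push g) q = 0"
    using push_mult[OF g, of p q] assms by simp
  hence "push (push g) p = 0 \<or> push (push g) q = 0" by simp
  thus ?thesis using ig by (metis injD push_zero)
qed



definition hit :: "('k \<Rightarrow> bool) \<Rightarrow> ('k \<Rightarrow>\<^sub>0 nat) \<Rightarrow> bool" where
  "hit V m \<longleftrightarrow> (\<exists>v\<in>Poly_Mapping.keys m. V v)"
definition res :: "('k \<Rightarrow> bool) \<Rightarrow> (('k \<Rightarrow>\<^sub>0 nat) \<Rightarrow>\<^sub>0 'a::field) \<Rightarrow> (('k \<Rightarrow>\<^sub>0 nat) \<Rightarrow>\<^sub>0 'a)" where
  "res V p = Abs_poly_mapping (\<lambda>m. if hit V m then 0 else Poly_Mapping.lookup p m)"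
lemma sub: "{m. (if hit V m then 0 else Poly_Mapping.lookup p m) \<noteq> 0} \<subseteq> Poly_Mapping.keys p"
    by (auto simp: in_keys_iff split: if_splits)
lemma fin: "finite {m. (if hit V m then 0 else Poly_Mapping.lookup p m) \<noteq> 0}"
    by (rule finite_subset[OF sub finite_keys])
lemma lookup_res: "Poly_Mapping.lookup (res V p) m = (if hit V m then 0 else Poly_Mapping.lookup p m)"
  unfolding res_def by (simp only: lookup_Abs_poly_mapping[OF fin])
definition Pset :: "('k \<Rightarrow> bool) \<Rightarrow> (('k \<Rightarrow>\<^sub>0 nat) \<Rightarrow>\<^sub>0 'a::field) set" where
  "Pset V = {p. \<forall>m\<in>Poly_Mapping.keys p. hit V m}"

lemma keys_add_nat: "Poly_Mapping.keys ((x::'k \<Rightarrow>\<^sub>0 nat) + y) = Poly_Mapping.keys x \<union> Poly_Mapping.keys y"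
  by (auto simp: in_keys_iff lookup_add)

lemma hit_add: "hit V (x + y) \<longleftrightarrow> hit V x \<or> hit V y"
  by (auto simp: hit_def keys_add_nat)

lemma Pset_zero: "0 \<in> Pset V" by (simp add: Pset_def)

lemma Pset_add: "a \<in> Pset V \<Longrightarrow> b \<in> Pset V \<Longrightarrow> a + b \<in> Pset V"
proof -
  assume a: "a \<in> Pset V" and b: "b \<in> Pset V"
  { fix m assume "m \<in> Poly_Mapping.keys (a + b)"
    hence "m \<in> Poly_Mapping.keys a \<union> Poly_Mapping.keys b" using keys_add[of a b] by blast
    hence "hit V m" using a b unfolding Pset_def mem_Collect_eq by blast }
  thus ?thesis unfolding Pset_def mem_Collect_eq by blast
qed

lemma Pset_mult: "a \<in> Pset V \<Longrightarrow> r * a \<in> Pset V"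
proof -
  assume a: "a \<in> Pset V"
  { fix m assume m: "m \<in> Poly_Mapping.keys (r * a)"
    have "m \<in> {x + y |x y. x \<in> Poly_Mapping.keys r \<and> y \<in> Poly_Mapping.keys a}"
      using subsetD[OF keys_mult[of r a] m] .
    then obtain x y where xy: "m = x + y" "y \<in> Poly_Mapping.keys a" unfolding mem_Collect_eq by blast
    have "hit V y" using a xy(2) unfolding Pset_def mem_Collect_eq by blast
    hence "hit V (x + y)" by (simp add: hit_add)
    hence "hit V m" using xy(1) by simp }
  thus ?thesis unfolding Pset_def mem_Collect_eq by blast
qed

lemma Pset_mult2: "a \<in> Pset V \<Longrightarrow> a * r \<in> Pset V"
  using Pset_mult[of a V r] by (simp add: mult.commute)

lemma Pset_uminus: "a \<in> Pset V \<Longrightarrow> - a \<in> Pset V"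
  using Pset_mult[of a V "-1"] by simp

lemma Pset_diff: "a \<in> Pset V \<Longrightarrow> b \<in> Pset V \<Longrightarrow> a - b \<in> Pset V"
proof -
  assume a: "a \<in> Pset V" and b: "b \<in> Pset V"
  have "a + - b \<in> Pset V" by (rule Pset_add[OF a Pset_uminus[OF b]])
  thus ?thesis by (simp only: diff_conv_add_uminus)
qed

lemma res_diff_Pset: "p - res V p \<in> Pset V"
  by (auto simp: Pset_def in_keys_iff lookup_minus lookup_res split: if_splits)

lemma keys_res: "m \<in> Poly_Mapping.keys (res V p) \<Longrightarrow> \<not> hit V m"
  by (auto simp: in_keys_iff lookup_res split: if_splits)

lemma res_zero_iff: "res V p = 0 \<Longrightarrow> p \<in> Pset V"
  using res_diff_Pset[of p V] by simp

lemma Pset_prime: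
  fixes a c :: "('k::countable \<Rightarrow>\<^sub>0 nat) \<Rightarrow>\<^sub>0 'a::field"
  assumes "a * c \<in> Pset V"
  shows "a \<in> Pset V \<or> c \<in> Pset V"
proof -
  define a' where "a' = res V a"
  define c' where "c' = res V c"
  have a1: "a - a' \<in> Pset V" unfolding a'_def by (rule res_diff_Pset)
  have c1: "c - c' \<in> Pset V" unfolding c'_def by (rule res_diff_Pset)
  have eq: "a' * c' = a * c - (a - a') * c - a' * (c - c')" by (simp add: algebra_simps)
  have inP: "a' * c' \<in> Pset V"
    unfolding eq by (intro Pset_diff assms Pset_mult Pset_mult2 a1 c1)
  have "Poly_Mapping.keys (a' * c') = {}"
  proof (rule ccontr)
    assume "Poly_Mapping.keys (a' * c') \<noteq> {}"
    then obtain m where m: "m \<in> Poly_Mapping.keys (a' * c')" by blast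
    have "m \<in> {x + y |x y. x \<in> Poly_Mapping.keys a' \<and> y \<in> Poly_Mapping.keys c'}" using subsetD[OF keys_mult[of a' c'] m] .
    then obtain x y where "m = x + y" "x \<in> Poly_Mapping.keys a'" "y \<in> Poly_Mapping.keys c'" unfolding mem_Collect_eq by blast
    hence "\<not> hit V m" using keys_res[of x V a] keys_res[of y V c] unfolding a'_def c'_def by (simp add: hit_add)
    moreover have "hit V m" using inP m unfolding Pset_def mem_Collect_eq by blast
    ultimately show False by simp
  qed
  hence "a' * c' = 0" by simp
  hence "a' = 0 \<or> c' = 0" by (rule dpoly_no_zero_divisors)
  thus ?thesis unfolding a'_def c'_def using res_zero_iff by blast
qed

lemma Pset_radical:
  fixes a :: "('k::countable \<Rightarrow>\<^sub>0 nat) \<Rightarrow>\<^sub>0 'a::field"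
  shows "a ^ k \<in> Pset V \<Longrightarrow> k \<ge> 1 \<Longrightarrow> a \<in> Pset V"
proof (induction k)
  case 0 thus ?case by simp
next
  case (Suc k)
  show ?case
  proof (cases "k = 0")
    case True thus ?thesis using Suc by simp
  next
    case False
    from Suc.prems have "a * a ^ k \<in> Pset V" by simp
    hence "a \<in> Pset V \<or> a ^ k \<in> Pset V" by (rule Pset_prime)
    thus ?thesis using Suc.IH False by auto
  qed
qed

lemma one_notin_Pset: "(1 :: ('k \<Rightarrow>\<^sub>0 nat) \<Rightarrow>\<^sub>0 'a::field) \<notin> Pset V"
  by (simp add: Pset_def hit_def)

lemma Pset_prod_prime:
  fixes f :: "'b \<Rightarrow> ('k::countable \<Rightarrow>\<^sub>0 nat) \<Rightarrow>\<^sub>0 'a::field"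
  assumes "finite A" "prod f A \<in> Pset V"
  shows "\<exists>x\<in>A. f x \<in> Pset V"
  using assms
proof (induction A rule: finite_induct)
  case empty thus ?case by (simp add: Pset_def hit_def)
next
  case (insert x A)
  hence "f x * prod f A \<in> Pset V" by simp
  hence "f x \<in> Pset V \<or> prod f A \<in> Pset V" by (rule Pset_prime)
  thus ?case using insert.IH by auto
qed




definition shg :: "'n \<times> nat \<Rightarrow> 'n \<times> nat" where "shg v = (fst v, Suc (snd v))"

lemma inj_shg: "inj shg" by (auto simp: shg_def intro!: injI prod_eqI)

lemma shift_mon_push: "shift_mon m = push shg m"
  by (simp add: shift_mon_def push_def shg_def)

lemma keys_shift_mon: "(i, j) \<in> Poly_Mapping.keys m \<Longrightarrow> (i, Suc j) \<in> Poly_Mapping.keys (shift_mon m)"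
proof -
  assume "(i, j) \<in> Poly_Mapping.keys m"
  moreover have "Poly_Mapping.lookup (shift_mon m) (shg (i, j)) = Poly_Mapping.lookup m (i, j)"
    unfolding shift_mon_push lookup_push[OF inj_shg] by (simp add: inv_f_f[OF inj_shg])
  ultimately show ?thesis by (simp add: in_keys_iff shg_def)
qed

lemma hit_shift:
  assumes sc: "\<And>i j. V (i, j) \<Longrightarrow> V (i, Suc j)" and h: "hit V m"
  shows "hit V (shift_mon m)"
proof -
  obtain v where v: "v \<in> Poly_Mapping.keys m" "V v" using h unfolding hit_def by blast
  obtain i j where ij: "v = (i, j)" by (cases v)
  have "(i, Suc j) \<in> Poly_Mapping.keys (shift_mon m)" using v(1) ij by (simp add: keys_shift_mon)
  moreover have "V (i, Suc j)" using v(2) ij sc by simp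
  ultimately show ?thesis unfolding hit_def by (rule bexI[rotated])
qed

lemma keys_sigmaR: "Poly_Mapping.keys (sigmaR \<sigma> p) \<subseteq> shift_mon ` Poly_Mapping.keys p"
proof -
  have "Poly_Mapping.keys (sigmaR \<sigma> p) \<subseteq> (\<Union>m\<in>Poly_Mapping.keys p. Poly_Mapping.keys (Poly_Mapping.single (shift_mon m) (\<sigma> (Poly_Mapping.lookup p m))))"
    unfolding sigmaR_def by (rule keys_sum)
  also have "\<dots> \<subseteq> shift_mon ` Poly_Mapping.keys p" by auto
  finally show ?thesis .
qed

lemma Pset_sigma:
  assumes sc: "\<And>i j. V (i, j) \<Longrightarrow> V (i, Suc j)" and p: "p \<in> Pset V"
  shows "sigmaR \<sigma> p \<in> Pset V"
proof -
  { fix m assume "m \<in> Poly_Mapping.keys (sigmaR \<sigma> p)"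
    then obtain m0 where m0: "m0 \<in> Poly_Mapping.keys p" "m = shift_mon m0" using keys_sigmaR by blast
    have "hit V m0" using p m0(1) unfolding Pset_def mem_Collect_eq by blast
    hence "hit V m" using m0(2) hit_shift[of V, OF sc] by blast }
  thus ?thesis unfolding Pset_def mem_Collect_eq by blast
qed

lemma sigmaR_dvar:
  assumes "\<sigma> 1 = 1"
  shows "sigmaR \<sigma> (dvar i j :: ('n, 'a::field) dpoly) = dvar i (Suc j)"
proof -
  have "shift_mon (Poly_Mapping.single (i, j) (1::nat)) = Poly_Mapping.single (i, Suc j) 1"
    unfolding shift_mon_push push_single[OF inj_shg] by (simp add: shg_def)
  thus ?thesis using assms by (simp add: sigmaR_def dvar_def)
qed

lemma sigmaR_pow_dvar:
  assumes "\<sigma> 1 = 1"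
  shows "(sigmaR \<sigma> ^^ k) (dvar i j :: ('n, 'a::field) dpoly) = dvar i (j + k)"
  by (induction k) (simp_all add: sigmaR_dvar[of \<sigma>, OF assms])

definition Vb :: "('n \<Rightarrow> int) \<Rightarrow> 'n \<times> nat \<Rightarrow> bool" where
  "Vb b v = (0 \<le> b (fst v) \<and> b (fst v) \<le> int (snd v))"

lemma Vb_sc: "Vb b (i, j) \<Longrightarrow> Vb b (i, Suc j)" by (simp add: Vb_def)

lemma Pset_sigma_Vb: "p \<in> Pset (Vb b) \<Longrightarrow> sigmaR \<sigma> p \<in> Pset (Vb b)"
  by (rule Pset_sigma[where V = "Vb b"]) (auto simp: Vb_def)

lemma Pset_sigma_ideal: "sigma_ideal \<sigma> (Pset (Vb b) :: ('n, 'a::field) dpoly set)"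
  unfolding sigma_ideal_def is_ideal_def
proof (intro conjI ballI allI)
  show "0 \<in> Pset (Vb b)" by (rule Pset_zero)
next
  fix x y :: "('n, 'a) dpoly" assume "x \<in> Pset (Vb b)" "y \<in> Pset (Vb b)"
  thus "x + y \<in> Pset (Vb b)" by (rule Pset_add)
next
  fix x r :: "('n, 'a) dpoly" assume "x \<in> Pset (Vb b)"
  thus "r * x \<in> Pset (Vb b)" by (rule Pset_mult)
next
  fix x :: "('n, 'a) dpoly" assume "x \<in> Pset (Vb b)"
  thus "sigmaR \<sigma> x \<in> Pset (Vb b)" by (rule Pset_sigma_Vb)
qed

lemma Pset_well_mixed:
  fixes b :: "'n::finite \<Rightarrow> int"
  shows "well_mixed \<sigma> (Pset (Vb b) :: ('n, 'a::field) dpoly set)"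
  unfolding well_mixed_def
proof (intro allI impI)
  fix x y :: "('n, 'a) dpoly" assume "x * y \<in> Pset (Vb b)"
  hence "x \<in> Pset (Vb b) \<or> y \<in> Pset (Vb b)" by (rule Pset_prime)
  thus "x * sigmaR \<sigma> y \<in> Pset (Vb b)"
  proof
    assume "x \<in> Pset (Vb b)" thus ?thesis by (rule Pset_mult2)
  next
    assume "y \<in> Pset (Vb b)" hence "sigmaR \<sigma> y \<in> Pset (Vb b)" by (rule Pset_sigma_Vb)
    thus ?thesis by (rule Pset_mult)
  qed
qed

lemma Pset_radical_set:
  fixes b :: "'n::finite \<Rightarrow> int"
  shows "radical_set (Pset (Vb b) :: ('n, 'a::field) dpoly set)"
  unfolding radical_set_def
proof (intro allI impI)
  fix a :: "('n, 'a) dpoly" and k :: nat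
  assume "1 \<le> k" "a ^ k \<in> Pset (Vb b)"
  thus "a \<in> Pset (Vb b)" using Pset_radical[of a k "Vb b"] by simp
qed

lemma ideal_sum:
  assumes "is_ideal J" "\<And>x. x \<in> A \<Longrightarrow> f x \<in> J"
  shows "sum f A \<in> J"
  using assms(2)
proof (induction A rule: infinite_finite_induct)
  case (infinite A) thus ?case using assms(1) by (simp add: is_ideal_def)
next
  case empty thus ?case using assms(1) by (simp add: is_ideal_def)
next
  case (insert x F) thus ?case using assms(1) unfolding is_ideal_def by simp
qed

lemma single_split:
  fixes m :: "'k \<Rightarrow>\<^sub>0 nat"
  assumes "v \<in> Poly_Mapping.keys m"
  shows "Poly_Mapping.single m c = Poly_Mapping.single (m - Poly_Mapping.single v 1) c * Poly_Mapping.single (Poly_Mapping.single v 1) (1::'a::comm_ring_1)"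
proof -
  have "m - Poly_Mapping.single v 1 + Poly_Mapping.single v 1 = m"
  proof (rule poly_mapping_eqI)
    fix k
    show "Poly_Mapping.lookup (m - Poly_Mapping.single v 1 + Poly_Mapping.single v 1) k = Poly_Mapping.lookup m k"
    proof (cases "k = v")
      case True
      have "Poly_Mapping.lookup m v \<noteq> 0" using assms by (simp add: in_keys_iff)
      thus ?thesis using True by (simp add: lookup_add lookup_minus)
    qed (simp add: lookup_add lookup_minus lookup_single)
  qed
  thus ?thesis by (simp add: mult_single)
qed

lemma mb_eq_Pset:
  fixes \<sigma> :: "'a::field \<Rightarrow> 'a" and b :: "'n \<Rightarrow> int"
  assumes endo: "ring_endo \<sigma>" and vb: "valid_b b"
  shows "mb \<sigma> b = Pset (Vb b)"
proof
  have G: "{dvar i (nat (b i)) | i. b i \<noteq> -1} \<subseteq> (Pset (Vb b) :: ('n, 'a) dpoly set)"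
  proof
    fix x :: "('n, 'a) dpoly" assume "x \<in> {dvar i (nat (b i)) | i. b i \<noteq> -1}"
    then obtain i where x: "x = dvar i (nat (b i))" "b i \<noteq> -1" by blast
    have "b i \<ge> -1" using vb unfolding valid_b_def by blast
    hence "b i \<ge> 0" using x(2) by linarith
    thus "x \<in> Pset (Vb b)" unfolding x(1) by (simp add: dvar_def Pset_def hit_def Vb_def)
  qed
  show "mb \<sigma> b \<subseteq> Pset (Vb b)"
    unfolding mb_def sigma_gen_def by (rule Inter_lower) (simp add: G Pset_sigma_ideal)
  show "Pset (Vb b) \<subseteq> mb \<sigma> b"
    unfolding mb_def sigma_gen_def
  proof (rule Inter_greatest)
    fix J assume "J \<in> {I. sigma_ideal \<sigma> I \<and> {dvar i (nat (b i)) | i. b i \<noteq> -1} \<subseteq> I}"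
    hence J: "sigma_ideal \<sigma> J" and GJ: "{dvar i (nat (b i)) | i. b i \<noteq> -1} \<subseteq> J" by auto
    have idJ: "is_ideal J" using J by (simp add: sigma_ideal_def)
    have s1: "\<sigma> 1 = 1" using endo by (simp add: ring_endo_def)
    have dv: "dvar i j \<in> J" if "Vb b (i, j)" for i j
    proof -
      have "b i \<noteq> -1" using that by (auto simp: Vb_def)
      hence g: "dvar i (nat (b i)) \<in> J" using GJ by blast
      have "\<forall>k. (sigmaR \<sigma> ^^ k) (dvar i (nat (b i))) \<in> J"
      proof
        fix k show "(sigmaR \<sigma> ^^ k) (dvar i (nat (b i))) \<in> J"
        proof (induction k)
          case 0 thus ?case using g by simp
        next
          case (Suc k)
          hence "sigmaR \<sigma> ((sigmaR \<sigma> ^^ k) (dvar i (nat (b i)))) \<in> J" using J unfolding sigma_ideal_def by blast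
          thus ?case by simp
        qed
      qed
      hence "(sigmaR \<sigma> ^^ (j - nat (b i))) (dvar i (nat (b i))) \<in> J" by blast
      hence "dvar i (nat (b i) + (j - nat (b i))) \<in> J" by (simp only: sigmaR_pow_dvar[of \<sigma>, OF s1])
      moreover have "nat (b i) + (j - nat (b i)) = j" using that by (auto simp: Vb_def)
      ultimately show ?thesis by simp
    qed
    show "Pset (Vb b) \<subseteq> J"
    proof
      fix p :: "('n, 'a) dpoly" assume p: "p \<in> Pset (Vb b)"
      have "(\<Sum>m\<in>Poly_Mapping.keys p. Poly_Mapping.single m (Poly_Mapping.lookup p m)) \<in> J"
      proof (rule ideal_sum[OF idJ])
        fix m assume m: "m \<in> Poly_Mapping.keys p"
        hence "hit (Vb b) m" using p unfolding Pset_def mem_Collect_eq by blast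
        then obtain i j where v: "(i, j) \<in> Poly_Mapping.keys m" "Vb b (i, j)" unfolding hit_def by auto
        have "Poly_Mapping.single m (Poly_Mapping.lookup p m) = Poly_Mapping.single (m - Poly_Mapping.single (i, j) 1) (Poly_Mapping.lookup p m) * dvar i j"
          unfolding dvar_def by (rule single_split[OF v(1)])
        moreover have "dvar i j \<in> J" using dv v(2) .
        ultimately show "Poly_Mapping.single m (Poly_Mapping.lookup p m) \<in> J"
          using idJ unfolding is_ideal_def by simp
      qed
      thus "p \<in> J" using pm_expand[of p] by simp
    qed
  qed
qed




lemma dvar_pow: "(dvar i j :: ('n, 'a::comm_ring_1) dpoly) ^ k = Poly_Mapping.single (Poly_Mapping.single (i, j) k) 1"
proof (induction k)
  case 0 thus ?case by simp
next
  case (Suc k)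
  have "(dvar i j :: ('n, 'a) dpoly) ^ Suc k = dvar i j * Poly_Mapping.single (Poly_Mapping.single (i, j) k) 1"
    using Suc.IH by simp
  also have "\<dots> = Poly_Mapping.single (Poly_Mapping.single (i, j) 1 + Poly_Mapping.single (i, j) k) 1"
    unfolding dvar_def by (simp add: mult_single)
  also have "Poly_Mapping.single (i, j) 1 + Poly_Mapping.single (i, j) k = Poly_Mapping.single (i, j) (Suc k)"
    by (simp add: single_add[symmetric])
  finally show ?case .
qed

lemma prod_single:
  "finite A \<Longrightarrow> (\<Prod>x\<in>A. Poly_Mapping.single (f x) (1::'a::comm_ring_1)) = Poly_Mapping.single (\<Sum>x\<in>A. f x) 1"
  by (induction A rule: finite_induct) (simp_all add: mult_single)

definition Mu :: "('n::finite \<Rightarrow> nat poly) \<Rightarrow> ('n \<times> nat) \<Rightarrow>\<^sub>0 nat" where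
  "Mu u = (\<Sum>i\<in>UNIV. \<Sum>j\<le>degree (u i). Poly_Mapping.single (i, j) (coeff (u i) j))"

lemma ymon_single: "(ymon u :: ('n::finite, 'a::field) dpoly) = Poly_Mapping.single (Mu u) 1"
proof -
  have "(ymon u :: ('n, 'a) dpoly) = (\<Prod>i\<in>UNIV. \<Prod>j\<le>degree (u i). Poly_Mapping.single (Poly_Mapping.single (i, j) (coeff (u i) j)) 1)"
    unfolding ymon_def by (simp only: dvar_pow)
  also have "\<dots> = (\<Prod>i\<in>UNIV. Poly_Mapping.single (\<Sum>j\<le>degree (u i). Poly_Mapping.single (i, j) (coeff (u i) j)) 1)"
    by (intro prod.cong refl prod_single) simp
  also have "\<dots> = Poly_Mapping.single (Mu u) 1"
    unfolding Mu_def by (intro prod_single) simp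
  finally show ?thesis .
qed

lemma lookup_Mu: "Poly_Mapping.lookup (Mu u) (i, j) = coeff (u i) j"
proof -
  have "Poly_Mapping.lookup (Mu u) (i, j) = (\<Sum>i'\<in>UNIV. \<Sum>j'\<le>degree (u i'). (coeff (u i') j' when (i', j') = (i, j)))"
    unfolding Mu_def lookup_sum lookup_single by (rule refl)
  also have "\<dots> = (\<Sum>i'\<in>UNIV. if i' = i then (\<Sum>j'\<le>degree (u i). (if j' = j then coeff (u i) j' else 0)) else 0)"
  proof (rule sum.cong[OF refl])
    fix i' show "(\<Sum>j'\<le>degree (u i'). (coeff (u i') j' when (i', j') = (i, j))) = (if i' = i then (\<Sum>j'\<le>degree (u i). (if j' = j then coeff (u i) j' else 0)) else 0)"
    proof (cases "i' = i")
      case True thus ?thesis by (simp add: when_def)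
    next
      case False thus ?thesis by (simp add: when_def)
    qed
  qed
  also have "\<dots> = (\<Sum>j'\<le>degree (u i). (if j' = j then coeff (u i) j' else 0))"
    by (simp add: sum.delta)
  also have "\<dots> = (if j \<le> degree (u i) then coeff (u i) j else 0)"
    by (simp add: sum.delta')
  also have "\<dots> = coeff (u i) j"
    by (auto simp: coeff_eq_0)
  finally show ?thesis .
qed

lemma hit_Mu: "hit (Vb b) (Mu u) \<longleftrightarrow> (\<exists>i. u i \<noteq> 0 \<and> 0 \<le> b i \<and> b i \<le> int (degree (u i)))"
proof
  assume "hit (Vb b) (Mu u)"
  then obtain v where v: "v \<in> Poly_Mapping.keys (Mu u)" "Vb b v" unfolding hit_def by blast
  obtain i j where ij: "v = (i, j)" by (cases v)
  have c: "coeff (u i) j \<noteq> 0" using v(1) ij by (simp add: in_keys_iff lookup_Mu)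
  hence "u i \<noteq> 0" by auto
  moreover have "j \<le> degree (u i)" using c by (rule le_degree)
  ultimately show "\<exists>i. u i \<noteq> 0 \<and> 0 \<le> b i \<and> b i \<le> int (degree (u i))"
    using v(2) ij by (auto simp: Vb_def)
next
  assume "\<exists>i. u i \<noteq> 0 \<and> 0 \<le> b i \<and> b i \<le> int (degree (u i))"
  then obtain i where i: "u i \<noteq> 0" "0 \<le> b i" "b i \<le> int (degree (u i))" by blast
  have "(i, degree (u i)) \<in> Poly_Mapping.keys (Mu u)" using i(1) by (simp add: in_keys_iff lookup_Mu)
  moreover have "Vb b (i, degree (u i))" using i by (simp add: Vb_def)
  ultimately show "hit (Vb b) (Mu u)" unfolding hit_def by (rule bexI[rotated])
qed

lemma ymon_in_Pset: "(ymon u :: ('n::finite, 'a::field) dpoly) \<in> Pset (Vb b) \<longleftrightarrow> (\<exists>i. u i \<noteq> 0 \<and> 0 \<le> b i \<and> b i \<le> int (degree (u i)))"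
  unfolding ymon_single hit_Mu[symmetric] by (simp add: Pset_def)




lemma rwm_least:
  assumes "sigma_ideal \<sigma> J" "well_mixed \<sigma> J" "radical_set J" "F \<subseteq> J"
  shows "rwm_closure \<sigma> F \<subseteq> J"
  unfolding rwm_closure_def by (rule Inter_lower) (simp add: assms)

lemma rwm_props:
  fixes \<sigma> :: "'a::field \<Rightarrow> 'a" and F :: "('n, 'a) dpoly set"
  defines "I \<equiv> rwm_closure \<sigma> F"
  shows "is_ideal I" "well_mixed \<sigma> I" "radical_set I" "F \<subseteq> I"
proof -
  let ?Fam = "{I. sigma_ideal \<sigma> I \<and> well_mixed \<sigma> I \<and> radical_set I \<and> F \<subseteq> I}"
  have mem: "x \<in> I \<longleftrightarrow> (\<forall>J\<in>?Fam. x \<in> J)" for x unfolding I_def rwm_closure_def by blast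
  show "is_ideal I" unfolding is_ideal_def
  proof (intro conjI ballI allI)
    show "0 \<in> I" unfolding mem by (auto simp: sigma_ideal_def is_ideal_def)
  next
    fix a b assume "a \<in> I" "b \<in> I"
    thus "a + b \<in> I" unfolding mem by (auto simp: sigma_ideal_def is_ideal_def)
  next
    fix a r assume "a \<in> I"
    thus "r * a \<in> I" unfolding mem by (auto simp: sigma_ideal_def is_ideal_def)
  qed
  show "well_mixed \<sigma> I" unfolding well_mixed_def
  proof (intro allI impI)
    fix a b assume "a * b \<in> I"
    hence h: "\<forall>J\<in>?Fam. a * b \<in> J" unfolding mem .
    show "a * sigmaR \<sigma> b \<in> I" unfolding mem
    proof
      fix J assume J: "J \<in> ?Fam"
      hence "well_mixed \<sigma> J" by blast
      moreover have "a * b \<in> J" using h J by blast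
      ultimately show "a * sigmaR \<sigma> b \<in> J" unfolding well_mixed_def by blast
    qed
  qed
  show "radical_set I" unfolding radical_set_def
  proof (intro allI impI)
    fix a :: "('n, 'a) dpoly" and k :: nat assume "1 \<le> k" "a ^ k \<in> I"
    hence h: "\<forall>J\<in>?Fam. a ^ k \<in> J" unfolding mem by blast
    show "a \<in> I" unfolding mem
    proof
      fix J assume J: "J \<in> ?Fam"
      hence "radical_set J" by blast
      moreover have "a ^ k \<in> J" using h J by blast
      ultimately show "a \<in> J" unfolding radical_set_def using \<open>1 \<le> k\<close> by blast
    qed
  qed
  show "F \<subseteq> I"
  proof
    fix x assume "x \<in> F" thus "x \<in> I" unfolding mem by blast
  qed
qed

definition shiftR :: "('n, 'a::field) dpoly set \<Rightarrow> ('n, 'a) dpoly \<Rightarrow> ('n, 'a) dpoly \<Rightarrow> bool" where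
  "shiftR I x y \<longleftrightarrow> (\<forall>a. a * x \<in> I \<longrightarrow> a * y \<in> I)"

lemma shiftR_refl: "shiftR I x x" by (simp add: shiftR_def)

lemma shiftR_trans: "shiftR I x y \<Longrightarrow> shiftR I y z \<Longrightarrow> shiftR I x z"
  by (simp add: shiftR_def)

lemma shiftR_mult: "shiftR I x y \<Longrightarrow> shiftR I x' y' \<Longrightarrow> shiftR I (x * x') (y * y')"
  unfolding shiftR_def
proof (intro allI impI)
  fix a assume h: "\<forall>a. a * x \<in> I \<longrightarrow> a * y \<in> I" "\<forall>a. a * x' \<in> I \<longrightarrow> a * y' \<in> I"
    and a: "a * (x * x') \<in> I"
  have "(a * x') * x \<in> I" using a by (simp add: ac_simps)
  hence "(a * x') * y \<in> I" using h(1) by blast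
  hence "(a * y) * x' \<in> I" by (simp add: ac_simps)
  hence "(a * y) * y' \<in> I" using h(2) by blast
  thus "a * (y * y') \<in> I" by (simp add: ac_simps)
qed

lemma shiftR_pow: "shiftR I x y \<Longrightarrow> shiftR I (x ^ k) (y ^ k)"
  by (induction k) (simp_all add: shiftR_refl shiftR_mult)

lemma shiftR_prod: "(\<And>t. t \<in> A \<Longrightarrow> shiftR I (f t) (g t)) \<Longrightarrow> shiftR I (prod f A) (prod g A)"
proof (induction A rule: infinite_finite_induct)
  case (infinite A) thus ?case by (simp add: shiftR_refl)
next
  case empty thus ?case by (simp add: shiftR_refl)
next
  case (insert x F) thus ?case by (simp add: shiftR_mult)
qed

lemma shiftR_dvar_Suc:
  assumes "well_mixed \<sigma> I" "\<sigma> 1 = 1"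
  shows "shiftR I (dvar i j) (dvar i (Suc j))"
  unfolding shiftR_def
proof (intro allI impI)
  fix a assume "a * dvar i j \<in> I"
  hence "a * sigmaR \<sigma> (dvar i j) \<in> I" using assms(1) unfolding well_mixed_def by blast
  thus "a * dvar i (Suc j) \<in> I" by (simp add: sigmaR_dvar[of \<sigma>, OF assms(2)])
qed

lemma shiftR_dvar:
  assumes "well_mixed \<sigma> I" "\<sigma> 1 = 1" "j \<le> j'"
  shows "shiftR I (dvar i j) (dvar i j')"
  using assms(3)
proof (induction j' rule: dec_induct)
  case base thus ?case by (rule shiftR_refl)
next
  case (step n) thus ?case using shiftR_trans shiftR_dvar_Suc[OF assms(1,2)] by blast
qed

lemma single_div:
  fixes M M' :: "'k \<Rightarrow>\<^sub>0 nat"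
  assumes "\<And>v. Poly_Mapping.lookup M' v \<le> Poly_Mapping.lookup M v"
  shows "Poly_Mapping.single M c = Poly_Mapping.single (M - M') c * Poly_Mapping.single M' (1::'a::comm_ring_1)"
proof -
  have "M - M' + M' = M"
    by (rule poly_mapping_eqI) (simp add: lookup_add lookup_minus assms)
  thus ?thesis by (simp add: mult_single)
qed

lemma single_pow:
  fixes m :: "'k \<Rightarrow>\<^sub>0 nat"
  shows "\<exists>M. Poly_Mapping.single m c ^ K = Poly_Mapping.single M ((c::'a::comm_ring_1) ^ K) \<and> (\<forall>v. Poly_Mapping.lookup M v = K * Poly_Mapping.lookup m v)"
proof (induction K)
  case 0 thus ?case by (intro exI[of _ 0]) simp
next
  case (Suc K)
  then obtain M where M: "Poly_Mapping.single m c ^ K = Poly_Mapping.single M (c ^ K)" "\<forall>v. Poly_Mapping.lookup M v = K * Poly_Mapping.lookup m v" by blast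
  have "Poly_Mapping.single m c ^ Suc K = Poly_Mapping.single (m + M) (c ^ Suc K)"
    using M(1) by (simp add: mult_single)
  moreover have "\<forall>v. Poly_Mapping.lookup (m + M) v = Suc K * Poly_Mapping.lookup m v"
    using M(2) by (simp add: lookup_add)
  ultimately show ?case by blast
qed




lemma lookup_M':
  fixes J :: "'n::finite \<Rightarrow> nat" and N :: "'n \<Rightarrow> nat"
  shows "Poly_Mapping.lookup (\<Sum>i\<in>UNIV. Poly_Mapping.single (i, J i) (N i)) (i, j) = (if j = J i then N i else 0)"
proof -
  have "Poly_Mapping.lookup (\<Sum>i\<in>UNIV. Poly_Mapping.single (i, J i) (N i)) (i, j) = (\<Sum>i'\<in>UNIV. (N i' when (i', J i') = (i, j)))"
    unfolding lookup_sum lookup_single by (rule refl)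
  also have "\<dots> = (\<Sum>i'\<in>UNIV. if i' = i then (if j = J i then N i else 0) else 0)"
    by (intro sum.cong refl) (auto simp: when_def)
  also have "\<dots> = (if j = J i then N i else 0)" by (simp add: sum.delta)
  finally show ?thesis .
qed

lemma key_monomial:
  fixes I :: "('n::finite, 'a::field) dpoly set" and u :: "'n \<Rightarrow> nat poly"
  assumes idI: "is_ideal I" and wm: "well_mixed \<sigma> I" and rad: "radical_set I" and s1: "\<sigma> 1 = 1"
    and yu: "ymon u \<in> I"
    and hyp: "\<forall>i. u i \<noteq> 0 \<longrightarrow> (\<exists>j. (i, j) \<in> Poly_Mapping.keys m \<and> degree (u i) \<le> j)"
  shows "Poly_Mapping.single m c \<in> I"
proof -
  define J where "J i = (if u i \<noteq> 0 then (SOME j. (i, j) \<in> Poly_Mapping.keys m \<and> degree (u i) \<le> j) else degree (u i))" for i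
  have J: "degree (u i) \<le> J i \<and> (u i \<noteq> 0 \<longrightarrow> (i, J i) \<in> Poly_Mapping.keys m)" for i
  proof (cases "u i \<noteq> 0")
    case True
    hence "\<exists>j. (i, j) \<in> Poly_Mapping.keys m \<and> degree (u i) \<le> j" using hyp by blast
    hence "(i, (SOME j. (i, j) \<in> Poly_Mapping.keys m \<and> degree (u i) \<le> j)) \<in> Poly_Mapping.keys m \<and> degree (u i) \<le> (SOME j. (i, j) \<in> Poly_Mapping.keys m \<and> degree (u i) \<le> j)"
      by (rule someI_ex)
    moreover have "J i = (SOME j. (i, j) \<in> Poly_Mapping.keys m \<and> degree (u i) \<le> j)" using True by (simp add: J_def)
    ultimately have "(i, J i) \<in> Poly_Mapping.keys m \<and> degree (u i) \<le> J i" by simp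
    thus ?thesis by blast
  next
    case False thus ?thesis by (simp add: J_def)
  qed
  define N where "N i = (\<Sum>j\<le>degree (u i). coeff (u i) j)" for i
  have N0: "u i \<noteq> 0" if "N i \<noteq> 0" for i
    using that by (auto simp: N_def)
  have sh: "shiftR I (ymon u) (\<Prod>i\<in>UNIV. \<Prod>j\<le>degree (u i). dvar i (J i) ^ coeff (u i) j)"
    unfolding ymon_def
  proof (intro shiftR_prod shiftR_pow)
    fix i j assume "j \<in> {..degree (u i)}"
    hence "j \<le> J i" using J[of i] by auto
    thus "shiftR I (dvar i j) (dvar i (J i))" by (rule shiftR_dvar[OF wm s1])
  qed
  have eqY: "(\<Prod>i\<in>UNIV. \<Prod>j\<le>degree (u i). dvar i (J i) ^ coeff (u i) j) = (\<Prod>i\<in>UNIV. (dvar i (J i) :: ('n, 'a) dpoly) ^ N i)"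
    by (simp add: N_def power_sum)
  have "1 * ymon u \<in> I" using yu by simp
  hence Y: "(\<Prod>i\<in>UNIV. (dvar i (J i) :: ('n, 'a) dpoly) ^ N i) \<in> I"
  proof -
    have "\<forall>a. a * ymon u \<in> I \<longrightarrow> a * (\<Prod>i\<in>UNIV. (dvar i (J i) :: ('n, 'a) dpoly) ^ N i) \<in> I"
      using sh unfolding shiftR_def eqY .
    hence "1 * (\<Prod>i\<in>UNIV. (dvar i (J i) :: ('n, 'a) dpoly) ^ N i) \<in> I" using \<open>1 * ymon u \<in> I\<close> by blast
    thus ?thesis by simp
  qed
  define M' where "M' = (\<Sum>i\<in>UNIV. Poly_Mapping.single (i, J i) (N i))"
  have Ys: "(\<Prod>i\<in>UNIV. (dvar i (J i) :: ('n, 'a) dpoly) ^ N i) = Poly_Mapping.single M' 1"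
    unfolding dvar_pow M'_def by (rule prod_single) simp
  define K where "K = (\<Sum>i\<in>UNIV. N i) + 1"
  have NK: "N i < K" for i
  proof -
    have "N i \<le> (\<Sum>i\<in>UNIV. N i)" by (rule member_le_sum) auto
    thus ?thesis by (simp add: K_def)
  qed
  obtain Mk where Mk: "Poly_Mapping.single m c ^ K = Poly_Mapping.single Mk (c ^ K)"
      "\<forall>v. Poly_Mapping.lookup Mk v = K * Poly_Mapping.lookup m v"
    using single_pow[of m c K] by blast
  have le: "Poly_Mapping.lookup M' v \<le> Poly_Mapping.lookup Mk v" for v
  proof -
    obtain i j where v: "v = (i, j)" by (cases v)
    show ?thesis
    proof (cases "j = J i \<and> N i \<noteq> 0")
      case True
      hence "(i, j) \<in> Poly_Mapping.keys m" using J[of i] N0[of i] by auto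
      hence "Poly_Mapping.lookup m (i, j) \<ge> 1" by (simp add: in_keys_iff)
      hence "K * 1 \<le> K * Poly_Mapping.lookup m (i, j)" by (rule mult_le_mono2)
      hence "N i \<le> K * Poly_Mapping.lookup m (i, j)" using NK[of i] by linarith
      thus ?thesis using True Mk(2) v by (simp add: M'_def lookup_M')
    next
      case False thus ?thesis using v by (auto simp: M'_def lookup_M')
    qed
  qed
  have "Poly_Mapping.single m c ^ K = Poly_Mapping.single (Mk - M') (c ^ K) * Poly_Mapping.single M' 1"
    unfolding Mk(1) by (rule single_div) (rule le)
  also have "\<dots> \<in> I" using Y Ys idI unfolding is_ideal_def by simp
  finally have "Poly_Mapping.single m c ^ K \<in> I" .
  moreover have "K \<ge> 1" by (simp add: K_def)
  ultimately show ?thesis using rad unfolding radical_set_def by blast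
qed




lemma dickson_gen:
  fixes Js :: "'n set"
  assumes "finite Js"
  shows "\<exists>M\<subseteq>D. finite M \<and> (\<forall>d\<in>D. \<exists>m\<in>M. \<forall>i\<in>Js. m i \<le> (d i :: nat))"
  using assms
proof (induction Js arbitrary: D rule: finite_induct)
  case empty
  show ?case
  proof (cases "D = {}")
    case True thus ?thesis by auto
  next
    case False
    then obtain d0 where "d0 \<in> D" by blast
    hence "{d0} \<subseteq> D" by simp
    moreover have "\<forall>d\<in>D. \<exists>m\<in>{d0}. \<forall>i\<in>{}. m i \<le> (d i :: nat)" by simp
    ultimately show ?thesis by (intro exI[of _ "{d0}"]) simp
  qed
next
  case (insert j Js)
  obtain M0 where M0: "M0 \<subseteq> D" "finite M0" "\<forall>d\<in>D. \<exists>m\<in>M0. \<forall>i\<in>Js. m i \<le> d i"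
    using insert.IH[of D] by (elim exE conjE) (rule that)
  define K where "K = Max (insert 0 ((\<lambda>m. m j) ` M0))"
  have Kge: "m j \<le> K" if "m \<in> M0" for m
    unfolding K_def using M0(2) that by (intro Max_ge) auto
  have "\<forall>t. \<exists>Mt. Mt \<subseteq> {d\<in>D. d j = t} \<and> finite Mt \<and> (\<forall>d\<in>{d\<in>D. d j = t}. \<exists>m\<in>Mt. \<forall>i\<in>Js. m i \<le> d i)"
    by (rule allI, rule insert.IH)
  hence "\<exists>Mf. \<forall>t. Mf t \<subseteq> {d\<in>D. d j = t} \<and> finite (Mf t) \<and> (\<forall>d\<in>{d\<in>D. d j = t}. \<exists>m\<in>Mf t. \<forall>i\<in>Js. m i \<le> d i)"
    by (rule choice)
  then obtain Mf where Mf0: "\<forall>t. Mf t \<subseteq> {d\<in>D. d j = t} \<and> finite (Mf t) \<and> (\<forall>d\<in>{d\<in>D. d j = t}. \<exists>m\<in>Mf t. \<forall>i\<in>Js. m i \<le> d i)"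
    by (elim exE) (rule that)
  have Mf: "\<And>t. Mf t \<subseteq> {d\<in>D. d j = t}" "\<And>t. finite (Mf t)"
      "\<And>t. \<forall>d\<in>{d\<in>D. d j = t}. \<exists>m\<in>Mf t. \<forall>i\<in>Js. m i \<le> d i"
    using Mf0 by simp_all
  define M where "M = M0 \<union> (\<Union>t<K. Mf t)"
  have "M \<subseteq> D" unfolding M_def using M0(1) Mf(1) by blast
  moreover have "finite M" unfolding M_def using M0(2) Mf(2) by blast
  moreover have "\<forall>d\<in>D. \<exists>m\<in>M. \<forall>i\<in>insert j Js. m i \<le> d i"
  proof
    fix d assume d: "d \<in> D"
    show "\<exists>m\<in>M. \<forall>i\<in>insert j Js. m i \<le> d i"
    proof (cases "K \<le> d j")
      case True
      obtain m where m: "m \<in> M0" "\<forall>i\<in>Js. m i \<le> d i" using M0(3) d by blast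
      have "m j \<le> d j" using Kge[OF m(1)] True by linarith
      moreover have "m \<in> M" using m(1) unfolding M_def by blast
      ultimately show ?thesis using m(2) by blast
    next
      case False
      have "d \<in> {d\<in>D. d j = d j}" using d by simp
      then obtain m where m: "m \<in> Mf (d j)" "\<forall>i\<in>Js. m i \<le> d i" using Mf(3)[of "d j"] by blast
      have "m j = d j" using m(1) Mf(1)[of "d j"] by blast
      moreover have "m \<in> M" using m(1) False unfolding M_def by auto
      ultimately show ?thesis using m(2) by (metis insert_iff order_refl)
    qed
  qed
  ultimately show ?case by blast
qed

lemma dickson:
  fixes D :: "('n::finite \<Rightarrow> nat) set"
  shows "\<exists>M\<subseteq>D. finite M \<and> (\<forall>d\<in>D. \<exists>m\<in>M. \<forall>i. m i \<le> d i)"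
  using dickson_gen[of "UNIV :: 'n set" D] by simp

lemma find_below:
  fixes \<sigma> :: "'a::field \<Rightarrow> 'a" and B :: "('n::finite \<Rightarrow> int) set"
  assumes endo: "ring_endo \<sigma>" and fin: "finite B" and vB: "\<forall>c\<in>B. valid_b c" and v0: "valid_b b0"
    and sub: "(\<Inter>c\<in>B. mb \<sigma> c) \<subseteq> mb \<sigma> b0"
  shows "\<exists>c\<in>B. mb \<sigma> c \<subseteq> mb \<sigma> b0"
proof (rule ccontr)
  assume "\<not> (\<exists>c\<in>B. mb \<sigma> c \<subseteq> mb \<sigma> b0)"
  hence "\<forall>c\<in>B. \<exists>f. f \<in> mb \<sigma> c \<and> f \<notin> mb \<sigma> b0" by blast
  then obtain g where g: "\<And>c. c \<in> B \<Longrightarrow> g c \<in> mb \<sigma> c \<and> g c \<notin> mb \<sigma> b0" by metis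
  have "prod g B \<in> mb \<sigma> c" if c: "c \<in> B" for c
  proof -
    have "g c \<in> Pset (Vb c)" using g[OF c] mb_eq_Pset[OF endo] vB c by blast
    hence "g c * prod g (B - {c}) \<in> Pset (Vb c)" by (rule Pset_mult2)
    hence "prod g B \<in> Pset (Vb c)" using prod.remove[OF fin c, of g] by simp
    thus ?thesis using mb_eq_Pset[OF endo] vB c by blast
  qed
  hence "prod g B \<in> mb \<sigma> b0" using sub by blast
  hence "prod g B \<in> Pset (Vb b0)" using mb_eq_Pset[OF endo v0] by simp
  then obtain c where "c \<in> B" "g c \<in> Pset (Vb b0)" using Pset_prod_prime[OF fin] by blast
  thus False using g mb_eq_Pset[OF endo v0] by blast
qed

lemma uniq_half:
  fixes \<sigma> :: "'a::field \<Rightarrow> 'a" and B1 B2 :: "('n::finite \<Rightarrow> int) set"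
  assumes endo: "ring_endo \<sigma>"
    and f1: "finite B1" and v1: "\<forall>b\<in>B1. valid_b b" and e1: "I = (\<Inter>b\<in>B1. mb \<sigma> b)"
    and irr: "\<forall>b\<in>B1. (\<Inter>c\<in>B1 - {b}. mb \<sigma> c) \<noteq> I"
    and f2: "finite B2" and v2: "\<forall>b\<in>B2. valid_b b" and e2: "I = (\<Inter>b\<in>B2. mb \<sigma> b)"
  shows "mb \<sigma> ` B1 \<subseteq> mb \<sigma> ` B2"
proof
  fix P assume "P \<in> mb \<sigma> ` B1"
  then obtain b where b: "b \<in> B1" "P = mb \<sigma> b" by blast
  have "(\<Inter>c\<in>B2. mb \<sigma> c) \<subseteq> mb \<sigma> b" using e1 e2 b(1) by blast
  then obtain c where c: "c \<in> B2" "mb \<sigma> c \<subseteq> mb \<sigma> b" using find_below[OF endo f2 v2] v1 b(1) by blast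
  have "(\<Inter>c\<in>B1. mb \<sigma> c) \<subseteq> mb \<sigma> c" using e1 e2 c(1) by blast
  then obtain b' where b': "b' \<in> B1" "mb \<sigma> b' \<subseteq> mb \<sigma> c" using find_below[OF endo f1 v1] v2 c(1) by blast
  have "b' = b"
  proof (rule ccontr)
    assume ne: "b' \<noteq> b"
    have "(\<Inter>c\<in>B1 - {b}. mb \<sigma> c) \<subseteq> mb \<sigma> b'" using b'(1) ne by blast
    also have "\<dots> \<subseteq> mb \<sigma> b" using b'(2) c(2) by blast
    finally have s: "(\<Inter>c\<in>B1 - {b}. mb \<sigma> c) \<subseteq> mb \<sigma> b" .
    have "(\<Inter>c\<in>B1 - {b}. mb \<sigma> c) = (\<Inter>c\<in>B1. mb \<sigma> c)"
    proof
      show "(\<Inter>c\<in>B1 - {b}. mb \<sigma> c) \<subseteq> (\<Inter>c\<in>B1. mb \<sigma> c)"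
      proof
        fix x assume x: "x \<in> (\<Inter>c\<in>B1 - {b}. mb \<sigma> c)"
        hence "x \<in> mb \<sigma> b" using s by blast
        thus "x \<in> (\<Inter>c\<in>B1. mb \<sigma> c)" using x by blast
      qed
    qed blast
    thus False using irr b(1) e1 by blast
  qed
  hence "mb \<sigma> c = mb \<sigma> b" using b'(2) c(2) by blast
  thus "P \<in> mb \<sigma> ` B2" using b(2) c(1) by blast
qed




theorem theorem5p4:
  fixes \<sigma> :: "'a::field_char_0 \<Rightarrow> 'a"
    and S :: "('n::finite \<Rightarrow> nat poly) set"
    and I :: "('n, 'a) dpoly set"
  assumes endo: "ring_endo \<sigma>"
    and I_def: "I = rwm_closure \<sigma> (ymon ` S)"
  shows "(\<exists>B. finite B \<and> (\<forall>b\<in>B. valid_b b) \<and> I = (\<Inter>b\<in>B. mb \<sigma> b))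
    \<and> (\<forall>B1 B2. finite B1 \<and> (\<forall>b\<in>B1. valid_b b) \<and> I = (\<Inter>b\<in>B1. mb \<sigma> b)
                \<and> (\<forall>b\<in>B1. (\<Inter>c\<in>B1 - {b}. mb \<sigma> c) \<noteq> I)
           \<longrightarrow> finite B2 \<and> (\<forall>b\<in>B2. valid_b b) \<and> I = (\<Inter>b\<in>B2. mb \<sigma> b)
                \<and> (\<forall>b\<in>B2. (\<Inter>c\<in>B2 - {b}. mb \<sigma> c) \<noteq> I)
           \<longrightarrow> mb \<sigma> ` B1 = mb \<sigma> ` B2)"
proof (intro conjI allI impI)
  fix B1 B2 :: "('n \<Rightarrow> int) set"
  assume h1: "finite B1 \<and> (\<forall>b\<in>B1. valid_b b) \<and> I = (\<Inter>b\<in>B1. mb \<sigma> b) \<and> (\<forall>b\<in>B1. (\<Inter>c\<in>B1 - {b}. mb \<sigma> c) \<noteq> I)"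
    and h2: "finite B2 \<and> (\<forall>b\<in>B2. valid_b b) \<and> I = (\<Inter>b\<in>B2. mb \<sigma> b) \<and> (\<forall>b\<in>B2. (\<Inter>c\<in>B2 - {b}. mb \<sigma> c) \<noteq> I)"
  note f1 = conjunct1[OF h1] and v1 = conjunct1[OF conjunct2[OF h1]]
    and e1 = conjunct1[OF conjunct2[OF conjunct2[OF h1]]] and r1 = conjunct2[OF conjunct2[OF conjunct2[OF h1]]]
  note f2 = conjunct1[OF h2] and v2 = conjunct1[OF conjunct2[OF h2]]
    and e2 = conjunct1[OF conjunct2[OF conjunct2[OF h2]]] and r2 = conjunct2[OF conjunct2[OF conjunct2[OF h2]]]
  show "mb \<sigma> ` B1 = mb \<sigma> ` B2"
  proof
    show "mb \<sigma> ` B1 \<subseteq> mb \<sigma> ` B2" by (rule uniq_half[OF endo f1 v1 e1 r1 f2 v2 e2])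
    show "mb \<sigma> ` B2 \<subseteq> mb \<sigma> ` B1" by (rule uniq_half[OF endo f2 v2 e2 r2 f1 v1 e1])
  qed
next
  have s1: "\<sigma> 1 = 1" using endo by (simp add: ring_endo_def)
  have idI: "is_ideal I" and wmI: "well_mixed \<sigma> I" and radI: "radical_set I" and FI: "ymon ` S \<subseteq> I"
    unfolding I_def by (rule rwm_props)+
  define cc where "cc u = (\<lambda>i. if u i = 0 then 0 else Suc (degree (u i)))" for u :: "'n \<Rightarrow> nat poly"
  obtain M0 where M0: "M0 \<subseteq> cc ` S" "finite M0" "\<forall>d\<in>cc ` S. \<exists>m\<in>M0. \<forall>i. m i \<le> d i"
    using dickson[of "cc ` S"] by (elim exE conjE) (rule that)
  obtain M where M: "M \<subseteq> S" "finite M" "M0 = cc ` M"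
    using finite_subset_image[OF M0(2) M0(1)] by (elim exE conjE) (rule that)
  have dom: "\<exists>u'\<in>M. \<forall>i. u' i \<noteq> 0 \<longrightarrow> u i \<noteq> 0 \<and> degree (u' i) \<le> degree (u i)" if u: "u \<in> S" for u
  proof -
    have "cc u \<in> cc ` S" using u by simp
    then obtain m where m: "m \<in> M0" "\<forall>i. m i \<le> cc u i" using M0(3) by blast
    then obtain u' where u': "u' \<in> M" "m = cc u'" using M(3) by blast
    have "\<forall>i. u' i \<noteq> 0 \<longrightarrow> u i \<noteq> 0 \<and> degree (u' i) \<le> degree (u i)"
    proof (intro allI impI)
      fix i assume "u' i \<noteq> 0"
      moreover have "cc u' i \<le> cc u i" using m(2) u'(2) by simp
      ultimately show "u i \<noteq> 0 \<and> degree (u' i) \<le> degree (u i)"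
        by (auto simp: cc_def split: if_splits)
    qed
    thus ?thesis using u'(1) by blast
  qed
  define Cv :: "int set" where "Cv = insert (-1) ((\<lambda>p. int (degree (fst p (snd p)))) ` (M \<times> UNIV))"
  have finCv: "finite Cv" unfolding Cv_def using M(2) by simp
  define B where "B = {b. (\<forall>i. b i \<in> Cv) \<and> (\<forall>u\<in>S. (ymon u :: ('n, 'a) dpoly) \<in> Pset (Vb b))}"
  have finB: "finite B"
  proof (rule finite_subset)
    show "B \<subseteq> {b. \<forall>x. (x \<in> UNIV \<longrightarrow> b x \<in> Cv) \<and> (x \<notin> UNIV \<longrightarrow> b x = 0)}"
      unfolding B_def by blast
    show "finite {b. \<forall>x. (x \<in> UNIV \<longrightarrow> b x \<in> Cv) \<and> (x \<notin> (UNIV :: 'n set) \<longrightarrow> b x = (0::int))}"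
      by (rule finite_set_of_finite_funs) (simp_all add: finCv)
  qed
  have validB: "valid_b b" if "b \<in> B" for b
  proof -
    have "\<forall>i. b i \<in> Cv" using that unfolding B_def by blast
    have "\<forall>i. b i \<ge> -1"
    proof
      fix i have "b i \<in> Cv" using \<open>\<forall>i. b i \<in> Cv\<close> by blast
      then show "b i \<ge> -1" unfolding Cv_def by auto
    qed
    thus ?thesis by (simp add: valid_b_def)
  qed
  have mbB: "mb \<sigma> b = Pset (Vb b)" if "b \<in> B" for b
    using mb_eq_Pset[OF endo validB[OF that]] .
  have "I = (\<Inter>b\<in>B. mb \<sigma> b)"
  proof
    show "I \<subseteq> (\<Inter>b\<in>B. mb \<sigma> b)"
    proof (rule INT_greatest)
      fix b assume b: "b \<in> B"
      have "ymon ` S \<subseteq> (Pset (Vb b) :: ('n, 'a) dpoly set)" using b unfolding B_def by blast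
      hence "I \<subseteq> Pset (Vb b)" unfolding I_def
        by (intro rwm_least Pset_sigma_ideal Pset_well_mixed Pset_radical_set)
      thus "I \<subseteq> mb \<sigma> b" using mbB[OF b] by simp
    qed
  next
    show "(\<Inter>b\<in>B. mb \<sigma> b) \<subseteq> I"
    proof
      fix f assume f: "f \<in> (\<Inter>b\<in>B. mb \<sigma> b)"
      have "(\<Sum>m\<in>Poly_Mapping.keys f. Poly_Mapping.single m (Poly_Mapping.lookup f m)) \<in> I"
      proof (rule ideal_sum[OF idI])
        fix m assume m: "m \<in> Poly_Mapping.keys f"
        have hm: "hit (Vb b) m" if b: "b \<in> B" for b
        proof -
          have "f \<in> Pset (Vb b)" using f b mbB[OF b] by blast
          thus ?thesis using m unfolding Pset_def mem_Collect_eq by blast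
        qed
        define Z where "Z i = {int (degree (u i)) | u. u \<in> M \<and> u i \<noteq> 0 \<and> \<not> (\<exists>j. (i, j) \<in> Poly_Mapping.keys m \<and> degree (u i) \<le> j)}" for i
        have finZ: "finite (Z i)" for i
        proof (rule finite_subset)
          show "Z i \<subseteq> (\<lambda>u. int (degree (u i))) ` M" unfolding Z_def by blast
          show "finite ((\<lambda>u. int (degree (u i))) ` M)" using M(2) by simp
        qed
        define b' where "b' i = (if Z i = {} then -1 else Min (Z i))" for i
        have Zge: "z \<ge> 0" if "z \<in> Z i" for z i using that unfolding Z_def by auto
        have b'Cv: "b' i \<in> Cv" for i
        proof (cases "Z i = {}")
          case True thus ?thesis by (simp add: b'_def Cv_def)
        next
          case False
          hence "Min (Z i) \<in> Z i" using finZ by (intro Min_in) auto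
          then obtain u where u: "u \<in> M" "Min (Z i) = int (degree (u i))" unfolding Z_def by blast
          have "(u, i) \<in> M \<times> UNIV" using u(1) by simp
          hence "int (degree (u i)) \<in> Cv" unfolding Cv_def by force
          thus ?thesis using False u(2) by (simp add: b'_def)
        qed
        have nh: "\<not> hit (Vb b') m"
        proof
          assume "hit (Vb b') m"
          then obtain v where v: "v \<in> Poly_Mapping.keys m" "Vb b' v" unfolding hit_def by blast
          obtain i j where ij: "v = (i, j)" by (cases v)
          have bij: "0 \<le> b' i" "b' i \<le> int j" using v(2) ij by (auto simp: Vb_def)
          have ne: "Z i \<noteq> {}" using bij(1) by (auto simp: b'_def split: if_splits)
          hence "Min (Z i) \<in> Z i" using finZ by (intro Min_in) auto
          then obtain u where u: "u \<in> M" "Min (Z i) = int (degree (u i))"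
            "\<not> (\<exists>j. (i, j) \<in> Poly_Mapping.keys m \<and> degree (u i) \<le> j)" unfolding Z_def by blast
          have "degree (u i) \<le> j" using bij(2) ne u(2) by (simp add: b'_def)
          thus False using u(3) v(1) ij by blast
        qed
        have "b' \<notin> B" using nh hm by blast
        then obtain u where u: "u \<in> S" "(ymon u :: ('n, 'a) dpoly) \<notin> Pset (Vb b')"
          using b'Cv unfolding B_def by blast
        have unot: "\<not> (0 \<le> b' i \<and> b' i \<le> int (degree (u i)))" if "u i \<noteq> 0" for i
          using u(2) that unfolding ymon_in_Pset by blast
        obtain u' where u': "u' \<in> M" "\<forall>i. u' i \<noteq> 0 \<longrightarrow> u i \<noteq> 0 \<and> degree (u' i) \<le> degree (u i)"
          using dom[OF u(1)] by blast
        have hyp: "\<forall>i. u' i \<noteq> 0 \<longrightarrow> (\<exists>j. (i, j) \<in> Poly_Mapping.keys m \<and> degree (u' i) \<le> j)"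
        proof (intro allI impI)
          fix i assume ui: "u' i \<noteq> 0"
          show "\<exists>j. (i, j) \<in> Poly_Mapping.keys m \<and> degree (u' i) \<le> j"
          proof (rule ccontr)
            assume nj: "\<not> (\<exists>j. (i, j) \<in> Poly_Mapping.keys m \<and> degree (u' i) \<le> j)"
            have inZ: "int (degree (u' i)) \<in> Z i" unfolding Z_def using u'(1) ui nj by blast
            hence ne: "Z i \<noteq> {}" by blast
            have "Min (Z i) \<le> int (degree (u' i))" using finZ inZ by (rule Min_le)
            moreover have "Min (Z i) \<in> Z i" using finZ ne by (intro Min_in) auto
            hence "Min (Z i) \<ge> 0" by (rule Zge)
            moreover have "u i \<noteq> 0" "degree (u' i) \<le> degree (u i)" using u'(2) ui by auto
            ultimately have "0 \<le> b' i \<and> b' i \<le> int (degree (u i))" using ne by (simp add: b'_def)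
            thus False using unot[OF \<open>u i \<noteq> 0\<close>] by blast
          qed
        qed
        have "ymon u' \<in> I" using FI u'(1) M(1) by blast
        thus "Poly_Mapping.single m (Poly_Mapping.lookup f m) \<in> I"
          by (rule key_monomial[OF idI wmI radI s1 _ hyp])
      qed
      thus "f \<in> I" using pm_expand[of f] by simp
    qed
  qed
  thus "\<exists>B. finite B \<and> (\<forall>b\<in>B. valid_b b) \<and> I = (\<Inter>b\<in>B. mb \<sigma> b)"
    using finB validB by blast
qed


end
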